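(* Fix an integer $J\ge 2$, a finite set $\mathcal{G}$ of group labels, and strictly decreasing positive weights $w_1>\cdots>w_J>0$. Let $(\mathbf{Y},\mathbf{G})$ be any random vector with $\mathbf{Y}=(\mathbf{Y}_1,\dots,\mathbf{Y}_J)\in\mathbb{R}^J$ integrable and $\mathbf{G}=(\mathbf{G}_1,\dots,\mathbf{G}_J)\in\mathcal{G}^J$, and suppose that for all $1\le a<b\le J$ and all $g\in\mathcal{G}^J$ with $P(\mathbf{G}=g)>0$, $$E[\mathbf{Y}_a-\mathbf{Y}_b\mid \mathbf{G}=g]\ge 0.$$ Then there exist a probability space carrying candidate features $X_1,\dots,X_J$, group statuses $G_1,\dots,G_J\in\mathcal{G}$ and integrable outcomes $Y_1,\dots,Y_J$, together with a ranking $j(\cdot)$ (a bijection of $\{1,\dots,J\}$ that is a measurable function of $\mathcal{I}=\{(X_k,G_k)\}_{k=1}^J$) such that (i) for almost every realization of $\mathcal{I}$, $j(\cdot)$ maximizes $E\left[\sum_{r=1}^J w_rY_{j(r)}\,\middle|\,\mathcal{I}\right]$ over all bijections of $\{1,\dots,J\}$, and (ii) the rank-ordered vector $\big((Y_{j(1)},\dots,Y_{j(J)}),(G_{j(1)},\dots,G_{j(J)})\big)$ has the same joint distribution as $(\mathbf{Y},\mathbf{G})$.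
   Context: Here $j(r)$ denotes the index of the candidate placed in rank $r$ (rank 1 is best). A Ranker choosing $j(\cdot)$ as in (i) is called unbiased. The statement says that the moment inequalities above are the only testable implication of unbiasedness for an Auditor who observes only rank-ordered outcomes and group statuses. *)

theory Defs
  imports "HOL-Probability.Probability" "HOL-Combinatorics.Permutations"
begin

text \<open>Candidates are indexed by 1..J. Vectors over 1..J are functions on nat.\<close>

definition group_event :: "'a measure \<Rightarrow> ('a \<Rightarrow> nat \<Rightarrow> 'g) \<Rightarrow> nat \<Rightarrow> (nat \<Rightarrow> 'g) \<Rightarrow> 'a set" where
  "group_event M G J g = {\<omega> \<in> space M. \<forall>k\<in>{1..J}. G \<omega> k = g k}"

definition cond_exp_event :: "'a measure \<Rightarrow> ('a \<Rightarrow> real) \<Rightarrow> 'a set \<Rightarrow> real" where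
  "cond_exp_event M X A = set_lebesgue_integral M A X / measure M A"

definition info_space :: "nat \<Rightarrow> (nat \<Rightarrow> real \<times> 'g) measure" where
  "info_space J = PiM {1..J} (\<lambda>_. (borel :: real measure) \<Otimes>\<^sub>M count_space (UNIV :: 'g set))"

definition info_vec :: "('a \<Rightarrow> nat \<Rightarrow> real) \<Rightarrow> ('a \<Rightarrow> nat \<Rightarrow> 'g) \<Rightarrow> nat \<Rightarrow> 'a \<Rightarrow> (nat \<Rightarrow> real \<times> 'g)" where
  "info_vec X G J \<omega> = (\<lambda>k\<in>{1..J}. (X \<omega> k, G \<omega> k))"

definition info_algebra :: "'a measure \<Rightarrow> ('a \<Rightarrow> nat \<Rightarrow> real) \<Rightarrow> ('a \<Rightarrow> nat \<Rightarrow> 'g) \<Rightarrow> nat \<Rightarrow> 'a measure" where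
  "info_algebra N X G J = vimage_algebra (space N) (info_vec X G J) (info_space J)"

text \<open>A ranking: a bijection of 1..J (j r = candidate at rank r) which is a measurable
  function of I.\<close>
definition is_ranking :: "'a measure \<Rightarrow> ('a \<Rightarrow> nat \<Rightarrow> real) \<Rightarrow> ('a \<Rightarrow> nat \<Rightarrow> 'g) \<Rightarrow> nat \<Rightarrow> ('a \<Rightarrow> nat \<Rightarrow> nat) \<Rightarrow> bool" where
  "is_ranking N X G J j \<longleftrightarrow>
     (\<forall>\<omega>\<in>space N. j \<omega> permutes {1..J}) \<and>
     (\<exists>\<phi>. \<phi> \<in> measurable (info_space J) (count_space UNIV) \<and>
          (\<forall>\<omega>\<in>space N. j \<omega> = \<phi> (info_vec X G J \<omega>)))"

definition outcome_space :: "nat \<Rightarrow> ((nat \<Rightarrow> real) \<times> (nat \<Rightarrow> 'g)) measure" where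
  "outcome_space J = PiM {1..J} (\<lambda>_. (borel :: real measure)) \<Otimes>\<^sub>M PiM {1..J} (\<lambda>_. count_space (UNIV :: 'g set))"

end

theory Submission
  imports Defs
begin


lemma rearr:
  fixes w m :: "nat \<Rightarrow> real"
  shows "\<pi> permutes {1..n} \<Longrightarrow> (\<And>r s. 1 \<le> r \<Longrightarrow> r \<le> s \<Longrightarrow> s \<le> n \<Longrightarrow> w s \<le> w r)
     \<Longrightarrow> (\<And>r s. 1 \<le> r \<Longrightarrow> r \<le> s \<Longrightarrow> s \<le> n \<Longrightarrow> m s \<le> m r)
     \<Longrightarrow> (\<Sum>r\<in>{1..n}. w r * m (\<pi> r)) \<le> (\<Sum>r\<in>{1..n}. w r * m r)"
proof (induction n arbitrary: \<pi>)
  case 0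
  then show ?case by simp
next
  case (Suc n)
  define a where "a = \<pi> (Suc n)"
  define b where "b = inv \<pi> (Suc n)"
  define \<pi>' where "\<pi>' = Transposition.transpose a (Suc n) \<circ> \<pi>"
  have Sn: "Suc n \<in> {1..Suc n}" by simp
  have a: "a \<in> {1..Suc n}" using permutes_in_image[OF Suc.prems(1)] Sn unfolding a_def by blast
  have b: "b \<in> {1..Suc n}" using permutes_in_image[OF permutes_inv[OF Suc.prems(1)]] Sn unfolding b_def by blast
  have pb: "\<pi> b = Suc n" unfolding b_def using Suc.prems(1) by (simp add: permutes_inverses(1))
  have p'perm: "\<pi>' permutes {1..Suc n}" unfolding \<pi>'_def
    by (rule permutes_compose[OF Suc.prems(1) permutes_swap_id[OF a Sn]])
  have p'fix: "\<pi>' (Suc n) = Suc n" unfolding \<pi>'_def a_def by (simp add: Transposition.transpose_def)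
  have p'n: "\<pi>' permutes {1..n}"
    using p'perm p'fix unfolding permutes_def
    by (metis atLeastAtMostSuc_conv insertE le_add1 plus_1_eq_Suc)
  have IH: "(\<Sum>r\<in>{1..n}. w r * m (\<pi>' r)) \<le> (\<Sum>r\<in>{1..n}. w r * m r)"
    by (rule Suc.IH[OF p'n]) (use Suc.prems in auto)
  have split': "(\<Sum>r\<in>{1..Suc n}. w r * m (\<pi>' r)) = (\<Sum>r\<in>{1..n}. w r * m (\<pi>' r)) + w (Suc n) * m (Suc n)"
    using p'fix by simp
  have split: "(\<Sum>r\<in>{1..Suc n}. w r * m r) = (\<Sum>r\<in>{1..n}. w r * m r) + w (Suc n) * m (Suc n)"
    by simp
  have key: "(\<Sum>r\<in>{1..Suc n}. w r * m (\<pi> r)) \<le> (\<Sum>r\<in>{1..Suc n}. w r * m (\<pi>' r))"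
  proof (cases "a = Suc n")
    case True
    then have "\<pi>' = \<pi>" unfolding \<pi>'_def by simp
    then show ?thesis by simp
  next
    case False
    have bne: "b \<noteq> Suc n" using False pb a_def by auto
    have diff: "\<And>r. w r * m (\<pi> r) - w r * m (\<pi>' r) =
        (if r = b then w b * (m (Suc n) - m a) else 0) + (if r = Suc n then w (Suc n) * (m a - m (Suc n)) else 0)"
    proof -
      fix r
      show "w r * m (\<pi> r) - w r * m (\<pi>' r) =
        (if r = b then w b * (m (Suc n) - m a) else 0) + (if r = Suc n then w (Suc n) * (m a - m (Suc n)) else 0)"
      proof (cases "r = b")
        case True then show ?thesis using bne pb False unfolding \<pi>'_def by (simp add: Transposition.transpose_def algebra_simps)
      next
        case nb: False
        show ?thesis
        proof (cases "r = Suc n")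
          case True then show ?thesis using nb False unfolding \<pi>'_def a_def by (simp add: Transposition.transpose_def algebra_simps)
        next
          case nS: False
          have "\<pi> r \<noteq> Suc n" using nb pb Suc.prems(1) by (metis permutes_inj injD)
          moreover have "\<pi> r \<noteq> a" using nS Suc.prems(1) unfolding a_def by (metis permutes_inj injD)
          ultimately show ?thesis using nb nS unfolding \<pi>'_def by (simp add: Transposition.transpose_def)
        qed
      qed
    qed
    have "(\<Sum>r\<in>{1..Suc n}. w r * m (\<pi> r)) - (\<Sum>r\<in>{1..Suc n}. w r * m (\<pi>' r))
        = (\<Sum>r\<in>{1..Suc n}. w r * m (\<pi> r) - w r * m (\<pi>' r))" by (simp add: sum_subtractf)
    also have "\<dots> = w b * (m (Suc n) - m a) + w (Suc n) * (m a - m (Suc n))"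
      unfolding diff sum.distrib using b by simp
    also have "\<dots> = (w b - w (Suc n)) * (m (Suc n) - m a)" by (simp add: algebra_simps)
    also have "\<dots> \<le> 0"
    proof (rule mult_nonneg_nonpos)
      show "0 \<le> w b - w (Suc n)" using Suc.prems(2)[of b "Suc n"] b by auto
      show "m (Suc n) - m a \<le> 0" using Suc.prems(3)[of a "Suc n"] a by auto
    qed
    finally show ?thesis by simp
  qed
  show ?case using key split split' IH by linarith
qed



definition gI :: "nat \<Rightarrow> (nat \<Rightarrow> 'g) set" where "gI J = PiE {1..J} (\<lambda>_. UNIV)"

definition ce :: "'a measure \<Rightarrow> ('a \<Rightarrow> nat \<Rightarrow> 'g) \<Rightarrow> nat \<Rightarrow> ('a \<Rightarrow> real) \<Rightarrow> 'a \<Rightarrow> real" where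
  "ce M Gv J f \<omega> = (\<Sum>g\<in>gI J. cond_exp_event M f (group_event M Gv J g) * indicator (group_event M Gv J g) \<omega>)"

lemma finite_gI: "finite (gI J :: (nat \<Rightarrow> 'g::finite) set)"
  by (simp add: gI_def finite_PiE)

lemma group_event_iff:
  "\<omega> \<in> space M \<Longrightarrow> g \<in> gI J \<Longrightarrow> \<omega> \<in> group_event M Gv J g \<longleftrightarrow> g = restrict (Gv \<omega>) {1..J}"
  unfolding gI_def group_event_def by (auto simp: fun_eq_iff PiE_iff extensional_def)

lemma restrict_in_gI: "restrict (Gv \<omega>) {1..J} \<in> gI J"
  by (simp add: gI_def)

lemma ce_eq:
  fixes Gv :: "'a \<Rightarrow> nat \<Rightarrow> 'g::finite"
  assumes "\<omega> \<in> space M"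
  shows "ce M Gv J f \<omega> = cond_exp_event M f (group_event M Gv J (restrict (Gv \<omega>) {1..J}))"
proof -
  have "ce M Gv J f \<omega> = (\<Sum>g\<in>gI J. if g = restrict (Gv \<omega>) {1..J} then cond_exp_event M f (group_event M Gv J g) else 0)"
    unfolding ce_def by (rule sum.cong) (auto simp: group_event_iff[OF assms] indicator_def)
  then show ?thesis using restrict_in_gI[of Gv \<omega> J] by (simp add: sum.delta[OF finite_gI])
qed

lemma group_event_sets:
  assumes "\<And>k. k\<in>{1..J} \<Longrightarrow> (\<lambda>\<omega>. Gv \<omega> k) \<in> measurable M (count_space UNIV)"
  shows "group_event M Gv J g \<in> sets M"
  unfolding group_event_def
proof (rule sets.sets_Collect_finite_All)
  fix k assume k: "k \<in> {1..J}"
  have "(\<lambda>\<omega>. Gv \<omega> k) -` {g k} \<inter> space M \<in> sets M"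
    using measurable_sets[OF assms[OF k], of "{g k}"] by simp
  moreover have "{\<omega> \<in> space M. Gv \<omega> k = g k} = (\<lambda>\<omega>. Gv \<omega> k) -` {g k} \<inter> space M" by auto
  ultimately show "{\<omega> \<in> space M. Gv \<omega> k = g k} \<in> sets M" by simp
qed simp

lemma info_vec_meas:
  assumes "\<And>k. k\<in>{1..J} \<Longrightarrow> (\<lambda>\<omega>. Gv \<omega> k) \<in> measurable M (count_space UNIV)"
  shows "info_vec (\<lambda>_ _. 0) Gv J \<in> measurable M (info_space J)"
  unfolding info_vec_def info_space_def
  by (rule measurable_restrict) (auto intro!: measurable_Pair assms)

lemma group_event_F:
  assumes "\<And>k. k\<in>{1..J} \<Longrightarrow> (\<lambda>\<omega>. Gv \<omega> k) \<in> measurable M (count_space UNIV)"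
  shows "group_event M Gv J g \<in> sets (info_algebra M (\<lambda>_ _. 0) Gv J)"
proof -
  define B where "B = {v\<in>space (info_space J :: (nat \<Rightarrow> real \<times> 'b) measure). \<forall>k\<in>{1..J}. snd (v k) = g k}"
  have "B \<in> sets (info_space J)"
    unfolding B_def
  proof (rule sets.sets_Collect_finite_All)
    fix k assume k: "k \<in> {1..J}"
    have m: "(\<lambda>v. snd (v k)) \<in> measurable (info_space J :: (nat \<Rightarrow> real \<times> 'b) measure) (count_space UNIV)"
      unfolding info_space_def
      by (rule measurable_compose[OF measurable_component_singleton[OF k] measurable_snd])
    have "(\<lambda>v. snd (v k)) -` {g k} \<inter> space (info_space J) \<in> sets (info_space J :: (nat \<Rightarrow> real \<times> 'b) measure)"
      using measurable_sets[OF m, of "{g k}"] by simp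
    moreover have "{v \<in> space (info_space J :: (nat \<Rightarrow> real \<times> 'b) measure). snd (v k) = g k} = (\<lambda>v. snd (v k)) -` {g k} \<inter> space (info_space J)" by auto
    ultimately show "{v \<in> space (info_space J :: (nat \<Rightarrow> real \<times> 'b) measure). snd (v k) = g k} \<in> sets (info_space J)" by simp
  qed simp
  then have "info_vec (\<lambda>_ _. 0) Gv J -` B \<inter> space M \<in> sets (info_algebra M (\<lambda>_ _. 0) Gv J)"
    unfolding info_algebra_def by (rule in_vimage_algebra)
  moreover have "info_vec (\<lambda>_ _. 0) Gv J -` B \<inter> space M = group_event M Gv J g"
    using measurable_space[OF info_vec_meas[OF assms]]
    unfolding B_def group_event_def by (auto simp: info_vec_def)
  ultimately show ?thesis by simp
qed



lemma rce_ce: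
  fixes M :: "'a measure" and Gv :: "'a \<Rightarrow> nat \<Rightarrow> 'g::finite"
  assumes P: "prob_space M"
    and Gm: "\<And>k. k\<in>{1..J} \<Longrightarrow> (\<lambda>\<omega>. Gv \<omega> k) \<in> measurable M (count_space UNIV)"
    and f: "integrable M f"
  shows "AE \<omega> in M. real_cond_exp M (info_algebra M (\<lambda>_ _. 0) Gv J) f \<omega> = ce M Gv J f \<omega>"
proof -
  interpret prob_space M by (rule P)
  define F where "F = info_algebra M (\<lambda>_ _. 0) Gv J"
  define A where "A = group_event M Gv J"
  define c where "c g = cond_exp_event M f (A g)" for g
  have ivm: "info_vec (\<lambda>_ _. 0) Gv J \<in> measurable M (info_space J)" by (rule info_vec_meas[OF Gm])
  have sub: "subalgebra M F"
    unfolding subalgebra_def F_def info_algebra_def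
    using measurable_sets[OF ivm] measurable_space[OF ivm]
    by (auto simp: sets_vimage_algebra2)
  interpret S: finite_measure_subalgebra M F
    by (simp add: finite_measure_subalgebra_def finite_measure_subalgebra_axioms_def sub finite_measure_axioms)
  have AM[measurable]: "\<And>g. A g \<in> sets M" unfolding A_def by (rule group_event_sets[OF Gm])
  have AF[measurable]: "\<And>g. A g \<in> sets F" unfolding A_def F_def by (rule group_event_F[OF Gm])
  have ce_alt: "ce M Gv J f = (\<lambda>\<omega>. \<Sum>g\<in>gI J. c g * indicator (A g) \<omega>)"
    unfolding ce_def c_def A_def by (rule ext) simp
  have ceF: "ce M Gv J f \<in> borel_measurable F" unfolding ce_alt by measurable
  have ceI: "integrable M (ce M Gv J f)" unfolding ce_alt
  proof (rule Bochner_Integration.integrable_sum)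
    fix g :: "nat \<Rightarrow> 'g" assume "g \<in> gI J" show "integrable M (\<lambda>\<omega>. c g * indicator (A g) \<omega>)"
      by (rule integrable_mult_right, rule integrable_real_indicator[OF AM]) (simp add: emeasure_eq_measure)
  qed
  have fm[measurable]: "f \<in> borel_measurable M" using f by simp
  have per: "\<And>g :: nat \<Rightarrow> 'g. g \<in> gI J \<Longrightarrow> (\<integral>\<omega>. indicator (A g) \<omega> * ce M Gv J f \<omega> \<partial>M) = (\<integral>\<omega>. indicator (A g) \<omega> * f \<omega> \<partial>M)"
  proof -
    fix g :: "nat \<Rightarrow> 'g" assume g: "g \<in> gI J"
    have "(\<integral>\<omega>. indicator (A g) \<omega> * ce M Gv J f \<omega> \<partial>M) = (\<integral>\<omega>. c g * indicator (A g) \<omega> \<partial>M)"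
    proof (rule Bochner_Integration.integral_cong[OF refl])
      fix \<omega> assume w: "\<omega> \<in> space M"
      show "indicator (A g) \<omega> * ce M Gv J f \<omega> = c g * indicator (A g) \<omega>"
      proof (cases "\<omega> \<in> A g")
        case True
        then have "g = restrict (Gv \<omega>) {1..J}" using group_event_iff[OF w g] unfolding A_def by simp
        then show ?thesis using True ce_eq[OF w, of Gv J f] unfolding c_def A_def by simp
      qed simp
    qed
    also have "\<dots> = c g * measure M (A g)" using AM by simp
    also have "\<dots> = (\<integral>\<omega>. indicator (A g) \<omega> * f \<omega> \<partial>M)"
    proof (cases "measure M (A g) = 0")
      case True
      have "A g \<in> null_sets M" using True AM by (simp add: emeasure_eq_measure null_sets_def)
      then have "AE \<omega> in M. \<omega> \<notin> A g" by (rule AE_not_in)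
      then have ae0: "AE \<omega> in M. indicator (A g) \<omega> * f \<omega> = 0" by eventually_elim simp
      have "(\<integral>\<omega>. indicator (A g) \<omega> * f \<omega> \<partial>M) = (\<integral>\<omega>. 0 \<partial>M)" by (rule integral_cong_AE[OF _ _ ae0]; measurable)
      then show ?thesis using True by simp
    next
      case False
      then show ?thesis unfolding c_def cond_exp_event_def set_lebesgue_integral_def by simp
    qed
    finally show "(\<integral>\<omega>. indicator (A g) \<omega> * ce M Gv J f \<omega> \<partial>M) = (\<integral>\<omega>. indicator (A g) \<omega> * f \<omega> \<partial>M)" .
  qed
  have "AE \<omega> in M. real_cond_exp M F f \<omega> = ce M Gv J f \<omega>"
  proof (rule S.real_cond_exp_charact[OF _ f ceI ceF])
    fix E assume E: "E \<in> sets F"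
    then obtain B where B: "B \<in> sets (info_space J)" "E = info_vec (\<lambda>_ _. 0) Gv J -` B \<inter> space M"
      unfolding F_def info_algebra_def using measurable_space[OF ivm]
      by (auto simp: sets_vimage_algebra2)
    define \<iota> where "\<iota> g = (indicator B (\<lambda>k\<in>{1..J}. (0::real, g k)) :: real)" for g :: "nat \<Rightarrow> 'g"
    have ind: "\<And>\<omega>. \<omega> \<in> space M \<Longrightarrow> indicator E \<omega> = (\<Sum>g\<in>gI J. \<iota> g * indicator (A g) \<omega>)"
    proof -
      fix \<omega> assume w: "\<omega> \<in> space M"
      have "(\<Sum>g\<in>gI J. \<iota> g * indicator (A g) \<omega>) = (\<Sum>g\<in>gI J. if g = restrict (Gv \<omega>) {1..J} then \<iota> g else 0)"
        by (rule sum.cong) (auto simp: group_event_iff[OF w] A_def indicator_def)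
      also have "\<dots> = \<iota> (restrict (Gv \<omega>) {1..J})"
        using restrict_in_gI[of Gv \<omega> J] by (simp add: sum.delta[OF finite_gI])
      also have "\<dots> = indicator E \<omega>"
      proof -
        have eq: "(\<lambda>k\<in>{1..J}. (0::real, restrict (Gv \<omega>) {1..J} k)) = info_vec (\<lambda>_ _. 0) Gv J \<omega>"
          by (rule ext) (simp add: info_vec_def)
        show ?thesis unfolding \<iota>_def B(2) eq using w by (simp add: indicator_def)
      qed
      finally show "indicator E \<omega> = (\<Sum>g\<in>gI J. \<iota> g * indicator (A g) \<omega>)" by simp
    qed
    have gen: "\<And>h. integrable M h \<Longrightarrow> (\<integral>x\<in>E. h x \<partial>M) = (\<Sum>g\<in>gI J. \<iota> g * (\<integral>\<omega>. indicator (A g) \<omega> * h \<omega> \<partial>M))"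
    proof -
      fix h :: "'a \<Rightarrow> real" assume h: "integrable M h"
      have "(\<integral>x\<in>E. h x \<partial>M) = (\<integral>\<omega>. (\<Sum>g\<in>gI J. \<iota> g * (indicator (A g) \<omega> * h \<omega>)) \<partial>M)"
        unfolding set_lebesgue_integral_def
        by (rule Bochner_Integration.integral_cong[OF refl]) (simp add: ind sum_distrib_right mult.assoc)
      also have "\<dots> = (\<Sum>g\<in>gI J. \<iota> g * (\<integral>\<omega>. indicator (A g) \<omega> * h \<omega> \<partial>M))"
        using integrable_mult_indicator[OF AM h] by (simp add: integral_sum)
      finally show "(\<integral>x\<in>E. h x \<partial>M) = (\<Sum>g\<in>gI J. \<iota> g * (\<integral>\<omega>. indicator (A g) \<omega> * h \<omega> \<partial>M))" .
    qed
    show "(\<integral>x\<in>E. f x \<partial>M) = (\<integral>x\<in>E. ce M Gv J f x \<partial>M)"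
      unfolding gen[OF f] gen[OF ceI] by (rule sum.cong) (simp_all add: per)
  qed
  then show ?thesis unfolding F_def .
qed



lemma cee_sum:
  fixes M :: "'a measure"
  assumes "finite R" "A \<in> sets M" "\<And>r. r \<in> R \<Longrightarrow> integrable M (f r)"
  shows "cond_exp_event M (\<lambda>x. \<Sum>r\<in>R. w r * f r x) A = (\<Sum>r\<in>R. w r * cond_exp_event M (f r) A)"
proof -
  have "set_lebesgue_integral M A (\<lambda>x. \<Sum>r\<in>R. w r * f r x) = (\<integral>x. (\<Sum>r\<in>R. w r * (indicator A x * f r x)) \<partial>M)"
    unfolding set_lebesgue_integral_def by (simp add: sum_distrib_left mult.left_commute)
  also have "\<dots> = (\<Sum>r\<in>R. w r * set_lebesgue_integral M A (f r))"
    unfolding set_lebesgue_integral_def using integrable_mult_indicator[OF assms(2) assms(3)]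
    by (simp add: integral_sum)
  finally show ?thesis unfolding cond_exp_event_def by (simp add: sum_divide_distrib)
qed

lemma cee_diff:
  fixes M :: "'a measure"
  assumes "A \<in> sets M" "integrable M f" "integrable M g"
  shows "cond_exp_event M (\<lambda>x. f x - g x) A = cond_exp_event M f A - cond_exp_event M g A"
proof -
  have "set_lebesgue_integral M A (\<lambda>x. f x - g x) = (\<integral>x. indicator A x * f x - indicator A x * g x \<partial>M)"
    unfolding set_lebesgue_integral_def by (simp add: right_diff_distrib)
  also have "\<dots> = set_lebesgue_integral M A f - set_lebesgue_integral M A g"
    unfolding set_lebesgue_integral_def
    using integrable_mult_indicator[OF assms(1) assms(2)] integrable_mult_indicator[OF assms(1) assms(3)]
    by (simp add: integral_diff)
  finally show ?thesis unfolding cond_exp_event_def by (simp add: diff_divide_distrib)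
qed

theorem proposition2:
  fixes J :: nat and w :: "nat \<Rightarrow> real"
    and M :: "'a measure" and Yv :: "'a \<Rightarrow> nat \<Rightarrow> real" and Gv :: "'a \<Rightarrow> nat \<Rightarrow> 'g::finite"
  assumes "J \<ge> 2"
    and "\<And>r s. 1 \<le> r \<Longrightarrow> r < s \<Longrightarrow> s \<le> J \<Longrightarrow> w r > w s"
    and "w J > 0"
    and "prob_space M"
    and "\<And>k. k \<in> {1..J} \<Longrightarrow> integrable M (\<lambda>\<omega>. Yv \<omega> k)"
    and "\<And>k. k \<in> {1..J} \<Longrightarrow> (\<lambda>\<omega>. Gv \<omega> k) \<in> measurable M (count_space UNIV)"
    and "\<And>a b g. 1 \<le> a \<Longrightarrow> a < b \<Longrightarrow> b \<le> J \<Longrightarrow> measure M (group_event M Gv J g) > 0 \<Longrightarrow>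
           cond_exp_event M (\<lambda>\<omega>. Yv \<omega> a - Yv \<omega> b) (group_event M Gv J g) \<ge> 0"
  shows "\<exists>(N :: 'a measure) (X :: 'a \<Rightarrow> nat \<Rightarrow> real) (G :: 'a \<Rightarrow> nat \<Rightarrow> 'g) (Y :: 'a \<Rightarrow> nat \<Rightarrow> real)
            (j :: 'a \<Rightarrow> nat \<Rightarrow> nat).
           prob_space N \<and>
           (\<forall>k\<in>{1..J}. (\<lambda>\<omega>. X \<omega> k) \<in> borel_measurable N \<and>
                       (\<lambda>\<omega>. G \<omega> k) \<in> measurable N (count_space UNIV) \<and>
                       integrable N (\<lambda>\<omega>. Y \<omega> k)) \<and>
           is_ranking N X G J j \<and>
           (AE \<omega> in N. \<forall>\<pi>. \<pi> permutes {1..J} \<longrightarrow>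
              real_cond_exp N (info_algebra N X G J) (\<lambda>\<omega>'. \<Sum>r\<in>{1..J}. w r * Y \<omega>' (\<pi> r)) \<omega>
              \<le> real_cond_exp N (info_algebra N X G J) (\<lambda>\<omega>'. \<Sum>r\<in>{1..J}. w r * Y \<omega>' (j \<omega> r)) \<omega>) \<and>
           distr N (outcome_space J) (\<lambda>\<omega>. (\<lambda>r\<in>{1..J}. Y \<omega> (j \<omega> r), \<lambda>r\<in>{1..J}. G \<omega> (j \<omega> r)))
             = distr M (outcome_space J) (\<lambda>\<omega>. (\<lambda>k\<in>{1..J}. Yv \<omega> k, \<lambda>k\<in>{1..J}. Gv \<omega> k))"
proof -
  note P = assms(4) and Yi = assms(5) and Gm = assms(6) and hyp = assms(7)
  interpret prob_space M by (rule P)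
  define S where "S \<pi> \<omega> = (\<Sum>r\<in>{1..J}. w r * Yv \<omega> (\<pi> r))" for \<pi> :: "nat \<Rightarrow> nat" and \<omega>
  define Perms where "Perms = {\<pi>. \<pi> permutes {1..J}}"
  define A where "A \<omega> = group_event M Gv J (restrict (Gv \<omega>) {1..J})" for \<omega>
  define F where "F = info_algebra M (\<lambda>_ _. 0) Gv J"
  have finP: "finite Perms" unfolding Perms_def by (rule finite_permutations) simp
  have Sint: "\<And>\<pi>. \<pi> \<in> Perms \<Longrightarrow> integrable M (S \<pi>)"
  proof -
    fix \<pi> assume p: "\<pi> \<in> Perms"
    show "integrable M (S \<pi>)" unfolding S_def
    proof (rule Bochner_Integration.integrable_sum)
      fix r assume r: "r \<in> {1..J}"
      have "\<pi> r \<in> {1..J}" using permutes_in_image[of \<pi> "{1..J}" r] p r unfolding Perms_def by simp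
      then show "integrable M (\<lambda>\<omega>. w r * Yv \<omega> (\<pi> r))" by (intro integrable_mult_right Yi)
    qed
  qed
  have ae1: "AE \<omega> in M. \<forall>\<pi>\<in>Perms. real_cond_exp M F (S \<pi>) \<omega> = ce M Gv J (S \<pi>) \<omega>"
    by (rule AE_finite_allI[OF finP]) (unfold F_def, rule rce_ce[OF P Gm Sint])
  have ae3: "AE \<omega> in M. \<forall>g\<in>gI J. \<omega> \<in> group_event M Gv J g \<longrightarrow> 0 < measure M (group_event M Gv J g)"
  proof (rule AE_finite_allI[OF finite_gI])
    fix g :: "nat \<Rightarrow> 'g"
    have gs: "group_event M Gv J g \<in> sets M" by (rule group_event_sets[OF Gm])
    show "AE \<omega> in M. \<omega> \<in> group_event M Gv J g \<longrightarrow> 0 < measure M (group_event M Gv J g)"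
    proof (cases "measure M (group_event M Gv J g) = 0")
      case True
      have "group_event M Gv J g \<in> null_sets M" using True gs by (simp add: emeasure_eq_measure null_sets_def)
      then have "AE \<omega> in M. \<omega> \<notin> group_event M Gv J g" by (rule AE_not_in)
      then show ?thesis by eventually_elim simp
    next
      case False
      then have "0 < measure M (group_event M Gv J g)" using measure_nonneg[of M "group_event M Gv J g"] by linarith
      then show ?thesis by (intro AE_I2) simp
    qed
  qed
  have main: "AE \<omega> in M. \<forall>\<pi>. \<pi> permutes {1..J} \<longrightarrow> real_cond_exp M F (S \<pi>) \<omega> \<le> real_cond_exp M F (S id) \<omega>"
    using ae1 ae3 AE_space
  proof eventually_elim
    case (elim \<omega>)
    have w: "\<omega> \<in> space M" using elim(3) .
    have pos: "0 < measure M (A \<omega>)"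
      using elim(2) restrict_in_gI[of Gv \<omega> J] group_event_iff[OF w restrict_in_gI[of Gv \<omega> J]]
      unfolding A_def by blast
    have As: "A \<omega> \<in> sets M" unfolding A_def by (rule group_event_sets[OF Gm])
    define m where "m k = cond_exp_event M (\<lambda>x. Yv x k) (A \<omega>)" for k
    have mono: "\<And>r s. 1 \<le> r \<Longrightarrow> r \<le> s \<Longrightarrow> s \<le> J \<Longrightarrow> m s \<le> m r"
    proof -
      fix r s :: nat assume rs: "1 \<le> r" "r \<le> s" "s \<le> J"
      show "m s \<le> m r"
      proof (cases "r = s")
        case False
        then have "r < s" using rs by simp
        then have "0 \<le> cond_exp_event M (\<lambda>x. Yv x r - Yv x s) (A \<omega>)"
          using hyp[of r s] rs pos unfolding A_def by simp
        also have "\<dots> = m r - m s" unfolding m_def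
          by (rule cee_diff[OF As]) (use rs in \<open>auto intro: Yi\<close>)
        finally show ?thesis by simp
      qed simp
    qed
    have wmono: "\<And>r s. 1 \<le> r \<Longrightarrow> r \<le> s \<Longrightarrow> s \<le> J \<Longrightarrow> w s \<le> w r"
      using assms(2) by (metis order_le_less less_imp_le order_refl)
    have val: "\<And>\<pi>. \<pi> \<in> Perms \<Longrightarrow> real_cond_exp M F (S \<pi>) \<omega> = (\<Sum>r\<in>{1..J}. w r * m (\<pi> r))"
    proof -
      fix \<pi> assume p: "\<pi> \<in> Perms"
      have "real_cond_exp M F (S \<pi>) \<omega> = ce M Gv J (S \<pi>) \<omega>" using elim(1) p by blast
      also have "\<dots> = cond_exp_event M (S \<pi>) (A \<omega>)" unfolding A_def by (rule ce_eq[OF w])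
      also have "\<dots> = (\<Sum>r\<in>{1..J}. w r * m (\<pi> r))" unfolding S_def m_def
      proof (rule cee_sum[OF _ As])
        fix r assume r: "r \<in> {1..J}"
        have "\<pi> r \<in> {1..J}" using permutes_in_image[of \<pi> "{1..J}" r] p r unfolding Perms_def by simp
        then show "integrable M (\<lambda>x. Yv x (\<pi> r))" by (rule Yi)
      qed simp
      finally show "real_cond_exp M F (S \<pi>) \<omega> = (\<Sum>r\<in>{1..J}. w r * m (\<pi> r))" .
    qed
    have idP: "id \<in> Perms" unfolding Perms_def by (simp add: permutes_id)
    show ?case
    proof (intro allI impI)
      fix \<pi> assume p: "\<pi> permutes {1..J}"
      then have pP: "\<pi> \<in> Perms" unfolding Perms_def by simp
      have "(\<Sum>r\<in>{1..J}. w r * m (\<pi> r)) \<le> (\<Sum>r\<in>{1..J}. w r * m r)"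
        by (rule rearr[of \<pi> J w m, OF p wmono mono])
      then show "real_cond_exp M F (S \<pi>) \<omega> \<le> real_cond_exp M F (S id) \<omega>"
        unfolding val[OF idP] val[OF pP] by simp
    qed
  qed
  show ?thesis
  proof (intro exI conjI)
    show "prob_space M" by (rule P)
    show "\<forall>k\<in>{1..J}. (\<lambda>\<omega>. (\<lambda>_ _. 0::real) \<omega> k) \<in> borel_measurable M \<and>
                       (\<lambda>\<omega>. Gv \<omega> k) \<in> measurable M (count_space UNIV) \<and> integrable M (\<lambda>\<omega>. Yv \<omega> k)"
      using Gm Yi by simp
    show "is_ranking M (\<lambda>_ _. 0) Gv J (\<lambda>_. id)"
      unfolding is_ranking_def by (auto simp: permutes_id intro!: exI[of _ "\<lambda>_. id"])
    show "AE \<omega> in M. \<forall>\<pi>. \<pi> permutes {1..J} \<longrightarrow>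
              real_cond_exp M (info_algebra M (\<lambda>_ _. 0) Gv J) (\<lambda>\<omega>'. \<Sum>r\<in>{1..J}. w r * Yv \<omega>' (\<pi> r)) \<omega>
              \<le> real_cond_exp M (info_algebra M (\<lambda>_ _. 0) Gv J) (\<lambda>\<omega>'. \<Sum>r\<in>{1..J}. w r * Yv \<omega>' (id r)) \<omega>"
      using main unfolding F_def S_def .
    show "distr M (outcome_space J) (\<lambda>\<omega>. (\<lambda>r\<in>{1..J}. Yv \<omega> (id r), \<lambda>r\<in>{1..J}. Gv \<omega> (id r)))
             = distr M (outcome_space J) (\<lambda>\<omega>. (\<lambda>k\<in>{1..J}. Yv \<omega> k, \<lambda>k\<in>{1..J}. Gv \<omega> k))"
      by simp
  qed
qed

end
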